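(* Let $P\subset\mathbb{R}^d$ be a polytope that multi-tiles $\mathbb{R}^d$ under $\mathcal{G}$, i.e. $\sum_{g\in\mathcal{G}}1_P(gx)=m$ for almost every $x\in\mathbb{R}^d$, for some integer $m$. Then the function $f_P(x)=\sum_{g\in\mathcal{G}}\omega_P(gx)$ is constant on $T=\{(x_1,\dots,x_d)\in\mathbb{R}^d: 0\le x_1\le\dots\le x_d\le 1/2\}$, equal to $|\mathcal{W}|\operatorname{vol}(P)$.
   Context: $\mathcal{W}$ is the group of linear maps of $\mathbb{R}^d$ generated by the reflections in the coordinate hyperplanes and all permutations of coordinates ($|\mathcal{W}|=2^d d!$); $\mathcal{G}$ is the group generated by $\mathcal{W}$ and all translations by vectors of $\mathbb{Z}^d$. $1_P$ is the indicator function of $P$, and $\omega_P(x)=\operatorname{vol}(B(x,r)\cap P)/\operatorname{vol}(B(x,r))$ for all sufficiently small $r>0$. *)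

theory Defs
  imports "HOL-Analysis.Analysis"
begin

text \<open>Points of R^d are vectors of type real^'n with d = CARD('n).\<close>

definition coord_reflection :: "'n::finite \<Rightarrow> (real^'n \<Rightarrow> real^'n)" where
  "coord_reflection k = (\<lambda>x. \<chi> i. if i = k then - (x $ i) else x $ i)"

definition coord_permutation :: "('n::finite \<Rightarrow> 'n) \<Rightarrow> (real^'n \<Rightarrow> real^'n)" where
  "coord_permutation \<sigma> = (\<lambda>x. \<chi> i. x $ (\<sigma> i))"

definition int_translation :: "real^'n::finite \<Rightarrow> (real^'n \<Rightarrow> real^'n)" where
  "int_translation v = (\<lambda>x. x + v)"

text \<open>The group W generated by reflections in coordinate hyperplanes and permutations
  of coordinates (all generators have finite order, so the generated monoid is the group).\<close>
inductive_set Wgroup :: "(real^'n::finite \<Rightarrow> real^'n) set" where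
  W_id: "id \<in> Wgroup"
| W_refl: "g \<in> Wgroup \<Longrightarrow> coord_reflection k \<circ> g \<in> Wgroup"
| W_perm: "g \<in> Wgroup \<Longrightarrow> \<sigma> permutes UNIV \<Longrightarrow> coord_permutation \<sigma> \<circ> g \<in> Wgroup"

inductive_set Ggroup :: "(real^'n::finite \<Rightarrow> real^'n) set" where
  G_id: "id \<in> Ggroup"
| G_W: "g \<in> Ggroup \<Longrightarrow> w \<in> Wgroup \<Longrightarrow> w \<circ> g \<in> Ggroup"
| G_trans: "g \<in> Ggroup \<Longrightarrow> (\<forall>i. v $ i \<in> \<int>) \<Longrightarrow> int_translation v \<circ> g \<in> Ggroup"

definition gen_polytope :: "(real^'n::finite) set \<Rightarrow> bool" where
  "gen_polytope P \<longleftrightarrow> (\<exists>\<F>. finite \<F> \<and> (\<forall>S\<in>\<F>. polytope S) \<and> P = \<Union>\<F>)"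

definition local_density :: "(real^'n::finite) set \<Rightarrow> real^'n \<Rightarrow> real" where
  "local_density P x = (THE c. \<exists>e>0. \<forall>r. 0 < r \<and> r < e \<longrightarrow>
      measure lebesgue (ball x r \<inter> P) / measure lebesgue (ball x r) = c)"

definition simplex_T :: "(real^'n::{finite,linorder}) set" where
  "simplex_T = {x. (\<forall>i. 0 \<le> x $ i \<and> x $ i \<le> 1/2) \<and> (\<forall>i j. i \<le> j \<longrightarrow> x $ i \<le> x $ j)}"

end

theory Submission
  imports Defs
begin

definition SP :: "(real^'n::finite \<Rightarrow> real^'n) set" where
  "SP = {w. \<exists>s \<sigma>. \<sigma> permutes UNIV \<and> (\<forall>i. s i = 1 \<or> s i = -1) \<and> w = (\<lambda>x. \<chi> i. s i * x $ \<sigma> i)}"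

lemma W_sub_SP: "Wgroup \<subseteq> SP"
proof
  fix g :: "real^'n \<Rightarrow> real^'n" assume "g \<in> Wgroup"
  then show "g \<in> SP"
  proof induction
    case W_id
    show ?case unfolding SP_def
      by (rule CollectI, rule exI[of _ "\<lambda>_. 1"], rule exI[of _ id]) (auto simp: permutes_id)
  next
    case (W_refl g k)
    then obtain s \<sigma> where h: "\<sigma> permutes UNIV" "\<forall>i. s i = 1 \<or> s i = -1" "g = (\<lambda>x. \<chi> i. s i * x $ \<sigma> i)"
      unfolding SP_def by blast
    show ?case unfolding SP_def
      apply (rule CollectI, rule exI[of _ "\<lambda>i. if i = k then - s i else s i"], rule exI[of _ \<sigma>])
      using h by (auto simp: coord_reflection_def fun_eq_iff vec_eq_iff)
  next
    case (W_perm g \<tau>)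
    then obtain s \<sigma> where h: "\<sigma> permutes UNIV" "\<forall>i. s i = 1 \<or> s i = -1" "g = (\<lambda>x. \<chi> i. s i * x $ \<sigma> i)"
      unfolding SP_def by blast
    show ?case unfolding SP_def
      apply (rule CollectI, rule exI[of _ "\<lambda>i. s (\<tau> i)"], rule exI[of _ "\<sigma> \<circ> \<tau>"])
      using h W_perm by (auto simp: coord_permutation_def fun_eq_iff vec_eq_iff permutes_compose)
  qed
qed

lemma finite_SP: "finite (SP :: (real^'n::finite \<Rightarrow> real^'n) set)"
proof -
  let ?S = "PiE (UNIV::'n set) (\<lambda>_. {1::real, -1})"
  let ?T = "{\<sigma>::'n\<Rightarrow>'n. \<sigma> permutes UNIV}"
  have "SP \<subseteq> (\<lambda>(s,\<sigma>). (\<lambda>x::real^'n. \<chi> i. s i * x $ \<sigma> i)) ` (?S \<times> ?T)"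
    unfolding SP_def by (auto simp: PiE_def Pi_def image_iff)
  moreover have "finite (?S \<times> ?T)"
    by (intro finite_cartesian_product finite_PiE finite_permutations) auto
  ultimately show ?thesis by (meson finite_imageI finite_subset)
qed

lemma finite_W: "finite (Wgroup :: (real^'n::finite \<Rightarrow> real^'n) set)"
  using finite_SP W_sub_SP finite_subset by blast

lemma W_comp: "w1 \<in> Wgroup \<Longrightarrow> w2 \<in> Wgroup \<Longrightarrow> w1 \<circ> w2 \<in> Wgroup"
proof (induction w1 rule: Wgroup.induct)
  case W_id then show ?case by simp
next
  case (W_refl g k)
  then have "coord_reflection k \<circ> (g \<circ> w2) \<in> Wgroup" by (intro Wgroup.W_refl)
  then show ?case by (simp only: comp_assoc)
next
  case (W_perm g \<sigma>)
  then have "coord_permutation \<sigma> \<circ> (g \<circ> w2) \<in> Wgroup" by (intro Wgroup.W_perm)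
  then show ?case by (simp only: comp_assoc)
qed

definition aff :: "(real^'n::finite \<Rightarrow> real^'n) \<Rightarrow> real^'n \<Rightarrow> real^'n \<Rightarrow> real^'n" where
  "aff w v = (\<lambda>x. w x + v)"

definition Zv :: "(real^'n::finite) set" where
  "Zv = {v. \<forall>i. v $ i \<in> \<int>}"

lemma SP_elim:
  assumes "w \<in> SP"
  obtains s \<sigma> where "\<sigma> permutes UNIV" "\<forall>i. s i = 1 \<or> s i = -1" "w = (\<lambda>x. \<chi> i. s i * x $ \<sigma> i)"
  using assms unfolding SP_def by blast

lemma SP_add: "w \<in> SP \<Longrightarrow> w (x + y) = w x + w y"
  by (erule SP_elim) (auto simp: vec_eq_iff algebra_simps)

lemma SP_scale: "w \<in> SP \<Longrightarrow> w (c *\<^sub>R x) = c *\<^sub>R w x"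
  by (erule SP_elim) (auto simp: vec_eq_iff algebra_simps)

lemma SP_linear: "w \<in> SP \<Longrightarrow> linear w"
  by (rule linearI) (auto simp: SP_add SP_scale)

lemma SP_Zv: assumes "w \<in> SP" "v \<in> Zv" shows "w v \<in> Zv"
proof -
  obtain s \<sigma> where h: "\<sigma> permutes UNIV" "\<forall>i. s i = 1 \<or> s i = -1" "w = (\<lambda>x. \<chi> i. s i * x $ \<sigma> i)"
    using assms(1) by (rule SP_elim)
  have "s i * v $ \<sigma> i \<in> \<int>" for i
  proof -
    have a: "v $ \<sigma> i \<in> \<int>" using assms(2) by (simp add: Zv_def)
    have "s i = 1 \<or> s i = -1" using h(2) by blast
    then show ?thesis
    proof
      assume "s i = 1" then show ?thesis using a by simp
    next
      assume "s i = -1" then show ?thesis using a by simp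
    qed
  qed
  then show "w v \<in> Zv" using h(3) by (simp add: Zv_def)
qed

lemma SP_norm: "w \<in> SP \<Longrightarrow> norm (w x) = norm x"
proof (erule SP_elim)
  fix s \<sigma> assume h: "\<sigma> permutes (UNIV::'a set)" "\<forall>i. s i = 1 \<or> s i = -1" "w = (\<lambda>x. \<chi> i. s i * x $ \<sigma> i)"
  have "(\<Sum>i\<in>UNIV. (s i * x $ \<sigma> i)\<^sup>2) = (\<Sum>i\<in>UNIV. (x $ \<sigma> i)\<^sup>2)"
  proof -
    have sq: "(s i * a)\<^sup>2 = a\<^sup>2" for i a
    proof -
      have "s i = 1 \<or> s i = -1" using h(2) by blast
      then show ?thesis by (elim disjE) (simp_all add: power2_eq_square)
    qed
    show ?thesis by (simp add: sq)
  qed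
  also have "\<dots> = (\<Sum>i\<in>UNIV. (x $ i)\<^sup>2)"
    using sum.permute[OF h(1), of "\<lambda>i. (x $ i)\<^sup>2"] by (simp add: comp_def)
  finally show ?thesis using h(3) by (simp add: norm_vec_def L2_set_def)
qed

lemma SP_inj: "w \<in> SP \<Longrightarrow> inj w"
proof (rule injI)
  fix x y assume "w \<in> SP" "w x = w y"
  then have "norm (w (x - y)) = 0" using SP_add[of w y "x - y"] by simp
  then have "norm (x - y) = 0" using SP_norm[OF \<open>w \<in> SP\<close>, of "x - y"] by simp
  then show "x = y" by simp
qed

lemma SP_surj: "w \<in> SP \<Longrightarrow> surj w"
  using SP_inj SP_linear linear_injective_imp_surjective by blast

lemma G_eq: "(Ggroup :: (real^'n::finite \<Rightarrow> real^'n) set) = (\<lambda>(w,v). aff w v) ` (Wgroup \<times> Zv)" (is "?A = ?B")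
proof
  show "?A \<subseteq> ?B"
  proof (rule subsetI)
    fix g assume "g \<in> ?A"
    then show "g \<in> ?B"
    proof induction
      case G_id
      show ?case by (rule image_eqI[of _ _ "(id,0)"]) (auto simp: Zv_def aff_def Wgroup.W_id)
    next
      case (G_W g w)
      then obtain w' v where h: "w' \<in> Wgroup" "v \<in> Zv" "g = aff w' v" by auto
      have "w \<circ> g = aff (w \<circ> w') (w v)"
        using SP_add W_sub_SP G_W(2) h by (auto simp: aff_def fun_eq_iff)
      moreover have "w \<circ> w' \<in> Wgroup" using W_comp G_W h by blast
      moreover have "w v \<in> Zv" using SP_Zv W_sub_SP G_W h by blast
      ultimately show ?case by (intro image_eqI[of _ _ "(w \<circ> w', w v)"]) auto
    next
      case (G_trans g u)
      then obtain w' v where h: "w' \<in> Wgroup" "v \<in> Zv" "g = aff w' v" by auto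
      have "int_translation u \<circ> g = aff w' (v + u)"
        using h by (auto simp: aff_def fun_eq_iff int_translation_def)
      moreover have "v + u \<in> Zv" using h G_trans by (auto simp: Zv_def)
      ultimately show ?case using h by (intro image_eqI[of _ _ "(w', v + u)"]) auto
    qed
  qed
  show "?B \<subseteq> ?A"
  proof (rule subsetI)
    fix g assume "g \<in> ?B"
    then obtain w v where wv: "w \<in> Wgroup" "v \<in> Zv" "g = aff w v" by auto
    have "aff w v = int_translation v \<circ> (w \<circ> id)" by (auto simp: aff_def int_translation_def)
    moreover have "w \<circ> id \<in> Ggroup" using wv(1) by (rule Ggroup.G_W[OF Ggroup.G_id])
    then have "int_translation v \<circ> (w \<circ> id) \<in> Ggroup"
      by (rule Ggroup.G_trans) (use wv(2) in \<open>simp add: Zv_def\<close>)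
    ultimately show "g \<in> ?A" using wv(3) by (simp only: comp_id)
  qed
qed

lemma aff_inj: "inj_on (\<lambda>(w,v). aff w v) (Wgroup \<times> (Zv :: (real^'n::finite) set))"
proof (rule inj_onI, clarify)
  fix w v w' v' assume h: "w \<in> Wgroup" "v \<in> Zv" "w' \<in> Wgroup" "v' \<in> Zv" "aff w v = aff w' v'"
  have 0: "w 0 = 0" "w' 0 = 0" using h W_sub_SP SP_linear linear_0 by blast+
  have "aff w v 0 = aff w' v' 0" using h(5) by simp
  then have "v = v'" using 0 unfolding aff_def by simp
  moreover have "w = w'"
  proof
    fix x have "aff w v x = aff w' v' x" using h(5) by simp
    then show "w x = w' x" using \<open>v = v'\<close> unfolding aff_def by simp
  qed
  ultimately show "w = w' \<and> v = v'" by simp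
qed

lemma SP_cbox:
  assumes "w \<in> SP"
  shows "measure lebesgue (w ` cbox a b) = measure lebesgue (cbox a b)"
proof (cases "cbox a b = {}")
  case True then show ?thesis by simp
next
  case False
  then have ab: "\<forall>i. a$i \<le> b$i" by (simp add: interval_ne_empty_cart)
  obtain s \<sigma> where h: "\<sigma> permutes UNIV" "\<forall>i. s i = 1 \<or> s i = -1" "w = (\<lambda>x. \<chi> i. s i * x $ \<sigma> i)"
    using assms by (rule SP_elim)
  define a' where "a' = (\<chi> i. if s i = 1 then a $ \<sigma> i else - b $ \<sigma> i)"
  define b' where "b' = (\<chi> i. if s i = 1 then b $ \<sigma> i else - a $ \<sigma> i)"
  have eq: "w ` cbox a b = cbox a' b'"
  proof
    show "w ` cbox a b \<subseteq> cbox a' b'"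
    proof clarify
      fix x assume x: "x \<in> cbox a b"
      show "w x \<in> cbox a' b'" unfolding mem_box_cart
      proof
        fix i
        have "s i = 1 \<or> s i = -1" using h(2) by blast
        then show "a' $ i \<le> w x $ i \<and> w x $ i \<le> b' $ i"
          using x unfolding mem_box_cart a'_def b'_def h(3) by (elim disjE) auto
      qed
    qed
    show "cbox a' b' \<subseteq> w ` cbox a b"
    proof
      fix y assume y: "y \<in> cbox a' b'"
      define x where "x = (\<chi> j. s (inv \<sigma> j) * y $ (inv \<sigma> j))"
      have ss: "s i * s i = 1" for i using h(2) by (metis mult_1 mult_minus1 minus_minus)
      have "w x = y"
        unfolding h(3) x_def vec_eq_iff
        using permutes_inverses(2)[OF h(1)] ss by (simp add: mult.assoc[symmetric])
      moreover have "x \<in> cbox a b" unfolding mem_box_cart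
      proof
        fix j
        define i where "i = inv \<sigma> j"
        have j: "\<sigma> i = j" unfolding i_def using permutes_inverses(1)[OF h(1)] by simp
        have "s i = 1 \<or> s i = -1" using h(2) by blast
        then show "a $ j \<le> x $ j \<and> x $ j \<le> b $ j"
          using y[unfolded mem_box_cart, rule_format, of i] unfolding x_def a'_def b'_def
          by (elim disjE) (auto simp: j i_def[symmetric])
      qed
      ultimately show "y \<in> w ` cbox a b" by blast
    qed
  qed
  have ne: "cbox a' b' \<noteq> {}" using False eq by auto
  have "(\<Prod>i\<in>UNIV. b' $ i - a' $ i) = (\<Prod>i\<in>UNIV. b $ \<sigma> i - a $ \<sigma> i)"
  proof (rule prod.cong)
    fix i
    have "s i = 1 \<or> s i = -1" using h(2) by blast
    then show "b' $ i - a' $ i = b $ \<sigma> i - a $ \<sigma> i" unfolding a'_def b'_def by auto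
  qed simp
  also have "\<dots> = (\<Prod>i\<in>UNIV. b $ i - a $ i)"
    using prod.permute[OF h(1), of "\<lambda>i. b $ i - a $ i"] by (simp add: comp_def)
  finally show ?thesis
    using eq ne False by (simp add: content_cbox_cart)
qed

lemma SP_measure:
  assumes "w \<in> SP" "S \<in> lmeasurable"
  shows "measure lebesgue (w ` S) = measure lebesgue S"
  using measure_linear_sufficient[OF SP_linear[OF assms(1)] assms(2), of 1] SP_cbox[OF assms(1)]
  by simp

lemma aff_measure:
  assumes "w \<in> SP" "S \<in> lmeasurable"
  shows "measure lebesgue (aff w v ` S) = measure lebesgue S"
proof -
  have "aff w v ` S = (+) v ` (w ` S)" by (auto simp: aff_def image_iff add.commute)
  then show ?thesis using SP_measure[OF assms] measure_translation by metis
qed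

definition lc :: "(real^'n::finite) set \<Rightarrow> real^'n \<Rightarrow> real \<Rightarrow> bool" where
  "lc A z e \<longleftrightarrow> (\<forall>y t. dist y z < e \<longrightarrow> 0 < t \<longrightarrow> t * dist y z < e \<longrightarrow>
       (y \<in> A \<longleftrightarrow> z + t *\<^sub>R (y - z) \<in> A))"

lemma lc_mono: "lc A z e \<Longrightarrow> e' \<le> e \<Longrightarrow> lc A z e'"
  unfolding lc_def by auto

lemma lc_Int: "lc A z e \<Longrightarrow> lc B z e \<Longrightarrow> lc (A \<inter> B) z e"
  unfolding lc_def by blast

lemma lc_Un: "lc A z e \<Longrightarrow> lc B z e \<Longrightarrow> lc (A \<union> B) z e"
  unfolding lc_def by blast

lemma lc_UNIV: "lc UNIV z e" unfolding lc_def by auto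
lemma lc_empty: "lc {} z e" unfolding lc_def by auto

lemma lc_halfspace: "\<exists>e>0. lc {x. a \<bullet> x \<le> b} z e"
proof -
  consider "a \<bullet> z < b" | "a \<bullet> z > b" | "a \<bullet> z = b" by linarith
  then show ?thesis
  proof cases
    case 1
    define e where "e = (b - a \<bullet> z) / (norm a + 1)"
    have na: "norm a + 1 > 0" by (smt (verit) norm_ge_zero)
    have e: "e > 0" using 1 na unfolding e_def by (simp add: divide_pos_pos)
    have key: "a \<bullet> y < b" if "dist y z < e" for y
    proof -
      have "a \<bullet> y - a \<bullet> z = a \<bullet> (y - z)" by (simp add: inner_diff_right)
      also have "\<dots> \<le> norm a * norm (y - z)" by (rule norm_cauchy_schwarz[THEN order_trans]) simp
      also have "\<dots> \<le> norm a * e" using that by (intro mult_left_mono) (auto simp: dist_norm)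
      also have "\<dots> < (norm a + 1) * e" using e by (simp add: distrib_right)
      also have "\<dots> = b - a \<bullet> z" unfolding e_def using na by simp
      finally show ?thesis by simp
    qed
    have "lc {x. a \<bullet> x \<le> b} z e"
      unfolding lc_def
    proof (intro allI impI)
      fix y t assume h: "dist y z < e" "0 < t" "t * dist y z < e"
      have "dist (z + t *\<^sub>R (y - z)) z = t * dist y z"
        using h(2) by (simp add: dist_norm)
      then show "(y \<in> {x. a \<bullet> x \<le> b}) = (z + t *\<^sub>R (y - z) \<in> {x. a \<bullet> x \<le> b})"
        using key[OF h(1)] key[of "z + t *\<^sub>R (y - z)"] h(3) by auto
    qed
    then show ?thesis using e by blast
  next
    case 2
    define e where "e = (a \<bullet> z - b) / (norm a + 1)"
    have na: "norm a + 1 > 0" by (smt (verit) norm_ge_zero)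
    have e: "e > 0" using 2 na unfolding e_def by (simp add: divide_pos_pos)
    have key: "a \<bullet> y > b" if "dist y z < e" for y
    proof -
      have "a \<bullet> z - a \<bullet> y = a \<bullet> (z - y)" by (simp add: inner_diff_right)
      also have "\<dots> \<le> norm a * norm (z - y)" by (rule norm_cauchy_schwarz[THEN order_trans]) simp
      also have "\<dots> \<le> norm a * e" using that by (intro mult_left_mono) (auto simp: dist_norm norm_minus_commute)
      also have "\<dots> < (norm a + 1) * e" using e by (simp add: distrib_right)
      also have "\<dots> = a \<bullet> z - b" unfolding e_def using na by simp
      finally show ?thesis by simp
    qed
    have "lc {x. a \<bullet> x \<le> b} z e"
      unfolding lc_def
    proof (intro allI impI)
      fix y t assume h: "dist y z < e" "0 < t" "t * dist y z < e"
      have "dist (z + t *\<^sub>R (y - z)) z = t * dist y z"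
        using h(2) by (simp add: dist_norm)
      then show "(y \<in> {x. a \<bullet> x \<le> b}) = (z + t *\<^sub>R (y - z) \<in> {x. a \<bullet> x \<le> b})"
        using key[OF h(1)] key[of "z + t *\<^sub>R (y - z)"] h(3) by auto
    qed
    then show ?thesis using e by blast
  next
    case 3
    have "lc {x. a \<bullet> x \<le> b} z 1"
      unfolding lc_def
    proof (intro allI impI)
      fix y t assume h0: "dist y z < 1" "0 < t" "t * dist y z < 1"
      note h = h0(2)
      have "a \<bullet> (z + t *\<^sub>R (y - z)) = b + t * (a \<bullet> y - b)"
        using 3 by (simp add: inner_add_right inner_diff_right)
      moreover have "t * (a \<bullet> y - b) \<le> 0 \<longleftrightarrow> a \<bullet> y - b \<le> 0"
        using h by (simp add: mult_le_0_iff)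
      ultimately show "(y \<in> {x. a \<bullet> x \<le> b}) = (z + t *\<^sub>R (y - z) \<in> {x. a \<bullet> x \<le> b})" by auto
    qed
    then show ?thesis by (intro exI[of _ 1]) simp
  qed
qed

definition VR :: "real \<Rightarrow> (real^'n::finite) set" where
  "VR R = {v. v \<in> Zv \<and> norm v \<le> R}"

lemma finite_VR: "finite (VR R :: (real^'n::finite) set)"
proof -
  let ?f = "\<lambda>v::real^'n. (\<lambda>i. \<lfloor>v $ i\<rfloor>)"
  have "inj_on ?f (VR R)"
  proof (rule inj_onI)
    fix u v assume uv: "u \<in> VR R" "v \<in> VR R" "?f u = ?f v"
    show "u = v" unfolding vec_eq_iff
    proof
      fix i
      have "u $ i \<in> \<int>" "v $ i \<in> \<int>" using uv(1,2) by (auto simp: VR_def Zv_def)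
      then have "u $ i = of_int \<lfloor>u $ i\<rfloor>" "v $ i = of_int \<lfloor>v $ i\<rfloor>"
        by (auto elim!: Ints_cases)
      moreover have "\<lfloor>u $ i\<rfloor> = \<lfloor>v $ i\<rfloor>" using uv(3) by (simp add: fun_eq_iff)
      ultimately show "u $ i = v $ i" by simp
    qed
  qed
  moreover have "?f ` VR R \<subseteq> PiE UNIV (\<lambda>_. {-\<lceil>R\<rceil>..\<lceil>R\<rceil>})"
  proof clarify
    fix v :: "real^'n" assume "v \<in> VR R"
    then have n: "norm v \<le> R" by (simp add: VR_def)
    show "?f v \<in> PiE UNIV (\<lambda>_. {-\<lceil>R\<rceil>..\<lceil>R\<rceil>})"
    proof (simp add: PiE_def Pi_def, intro allI conjI)
      fix i
      have "\<bar>v $ i\<bar> \<le> R" using component_le_norm_cart[of v i] n by linarith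
      then have a: "- R \<le> v $ i" "v $ i \<le> R" by linarith+
      have f1: "\<lfloor>- R\<rfloor> \<le> \<lfloor>v $ i\<rfloor>" by (rule floor_mono[OF a(1)])
      have "- \<lceil>R\<rceil> \<le> \<lfloor>v $ i\<rfloor>" using f1 by (simp add: ceiling_def)
      moreover have "\<lfloor>v $ i\<rfloor> \<le> \<lceil>R\<rceil>" using floor_mono[OF a(2)] floor_le_ceiling[of R] by linarith
      ultimately show "- \<lceil>R\<rceil> \<le> \<lfloor>v $ i\<rfloor>" "\<lfloor>v $ i\<rfloor> \<le> \<lceil>R\<rceil>" by auto
    qed
  qed
  moreover have "finite (PiE (UNIV::'n set) (\<lambda>_. {-\<lceil>R\<rceil>..\<lceil>R\<rceil>}))"
    by (intro finite_PiE) auto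
  ultimately show ?thesis by (rule inj_on_finite)
qed

lemma infsum_G:
  fixes h :: "(real^'n::finite \<Rightarrow> real^'n) \<Rightarrow> real"
  assumes "\<forall>w\<in>Wgroup. \<forall>v\<in>Zv. h (aff w v) \<noteq> 0 \<longrightarrow> norm v \<le> R"
  shows "(\<Sum>\<^sub>\<infinity>g\<in>Ggroup. h g) = (\<Sum>w\<in>Wgroup. \<Sum>v\<in>VR R. h (aff w v))"
proof -
  let ?T = "(\<lambda>(w,v). aff w v) ` (Wgroup \<times> VR R)"
  have sub: "Wgroup \<times> VR R \<subseteq> Wgroup \<times> Zv" by (auto simp: VR_def)
  have TS: "?T \<subseteq> Ggroup" unfolding G_eq using sub by (rule image_mono)
  have fin: "finite ?T" by (intro finite_imageI finite_cartesian_product finite_W finite_VR)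
  have "(\<Sum>\<^sub>\<infinity>g\<in>Ggroup. h g) = (\<Sum>\<^sub>\<infinity>g\<in>?T. h g)"
  proof (rule infsum_cong_neutral)
    fix x :: "real^'n \<Rightarrow> real^'n" assume "x \<in> ?T - Ggroup" then have False using TS by (auto simp del: G_eq)
    then show "h x = 0" ..
  next
    fix x :: "real^'n \<Rightarrow> real^'n" assume x: "x \<in> Ggroup - ?T"
    then have "x \<in> (\<lambda>(w,v). aff w v) ` (Wgroup \<times> Zv)" unfolding G_eq by (rule DiffD1)
    then obtain p where p: "p \<in> Wgroup \<times> Zv" "x = (\<lambda>(w,v). aff w v) p" by (rule imageE)
    define w where "w = fst p"
    define v where "v = snd p"
    have wv: "w \<in> Wgroup" "v \<in> Zv" "x = aff w v" using p unfolding w_def v_def by (auto simp: case_prod_unfold)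
    have "v \<notin> VR R"
    proof
      assume "v \<in> VR R"
      then have "x \<in> ?T" using wv by (intro image_eqI[of _ _ "(w,v)"]) auto
      then show False using x by simp
    qed
    then have "\<not> norm v \<le> R" using wv(2) by (simp add: VR_def)
    then show "h x = 0" using assms wv(1,2) unfolding wv(3) by blast
  qed simp
  also have "\<dots> = (\<Sum>g\<in>?T. h g)" by (rule infsum_finite[OF fin])
  also have "\<dots> = (\<Sum>(w,v)\<in>Wgroup \<times> VR R. h (aff w v))"
    by (subst sum.reindex) (use inj_on_subset[OF aff_inj sub] in \<open>auto simp: case_prod_unfold\<close>)
  also have "\<dots> = (\<Sum>w\<in>Wgroup. \<Sum>v\<in>VR R. h (aff w v))"
    by (rule sum.cartesian_product[symmetric])
  finally show ?thesis .
qed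

lemma closed_lebesgue: "closed A \<Longrightarrow> A \<in> sets lebesgue"
  using lebesgue_closedin[of UNIV A] by simp

lemma aff_cont: "w \<in> SP \<Longrightarrow> continuous (at x) (aff w v)"
proof -
  assume w: "w \<in> SP"
  have "bounded_linear w" using SP_linear[OF w] linear_conv_bounded_linear by blast
  then have "continuous (at x) w" by (rule linear_continuous_at)
  then show ?thesis unfolding aff_def by (intro continuous_intros)
qed

lemma closed_pre: assumes w: "w \<in> SP" and P: "closed P" shows "closed {y. aff w v y \<in> P}"
proof -
  have "\<And>x. isCont (aff w v) x" using aff_cont[OF w] by blast
  from continuous_closed_vimage[OF P this] show ?thesis by (simp add: vimage_def)
qed

lemma sum_measure:
  fixes P S :: "(real^'n::finite) set"
  assumes P: "closed P" "\<forall>y\<in>P. norm y \<le> R" and S: "S \<in> lmeasurable" "\<forall>y\<in>S. norm y \<le> R"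
    and AE: "AE x in lebesgue. (\<Sum>\<^sub>\<infinity>g\<in>Ggroup. indicator P (g x)) = real_of_int m"
  shows "(\<Sum>w\<in>Wgroup. \<Sum>v\<in>VR (2*R). measure lebesgue (S \<inter> {y. aff w v y \<in> P})) = m * measure lebesgue S"
proof -
  define A where "A w v = S \<inter> {y. aff w v y \<in> P}" for w v
  have Am: "A w v \<in> lmeasurable" if "w \<in> Wgroup" for w v
    unfolding A_def using that W_sub_SP closed_pre[OF _ P(1)]
    by (intro fmeasurable_Int_fmeasurable[OF S(1)] closed_lebesgue) blast
  have pt: "(\<Sum>\<^sub>\<infinity>g\<in>Ggroup. indicator P (g y) :: real) = (\<Sum>w\<in>Wgroup. \<Sum>v\<in>VR (2*R). indicator P (aff w v y) :: real)"
    if y: "y \<in> S" for y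
  proof -
  have "\<forall>w\<in>Wgroup. \<forall>v\<in>Zv. (indicator P (aff w v y) :: real) \<noteq> 0 \<longrightarrow> norm v \<le> 2 * R"
  proof (intro ballI impI)
    fix w v assume wv: "w \<in> Wgroup" "v \<in> Zv" and "(indicator P (aff w v y) :: real) \<noteq> 0"
    then have "w y + v \<in> P" by (simp add: aff_def indicator_def split: if_splits)
    then have "norm (w y + v) \<le> R" using P(2) by blast
    moreover have "norm (w y) \<le> R" using SP_norm[of w y] W_sub_SP wv(1) S(2) y by auto
    moreover have "norm v \<le> norm (w y + v) + norm (w y)"
      using norm_triangle_ineq4[of "w y + v" "w y"] by simp
    ultimately show "norm v \<le> 2 * R" by linarith
  qed
  then show ?thesis using infsum_G[where h="\<lambda>g. indicator P (g y)" and R="2*R"] by simp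
  qed
  have eq: "AE x in lebesgue. (\<Sum>w\<in>Wgroup. \<Sum>v\<in>VR (2*R). indicator (A w v) x) = indicator S x * real_of_int m"
    using AE
  proof eventually_elim
    case (elim x)
    show ?case
    proof (cases "x \<in> S")
      case True
      have "(\<Sum>w\<in>Wgroup. \<Sum>v\<in>VR (2*R). indicator (A w v) x) = (\<Sum>w\<in>Wgroup. \<Sum>v\<in>VR (2*R). (indicator P (aff w v x) :: real))"
        using True by (intro sum.cong refl) (simp add: A_def indicator_def)
      also have "\<dots> = real_of_int m" using pt[OF True] elim by simp
      finally show ?thesis using True by simp
    next
      case False
      then show ?thesis by (simp add: A_def indicator_def)
    qed
  qed
  have int_ind: "integrable lebesgue (indicator (A w v) :: _ \<Rightarrow> real)" if "w \<in> Wgroup" for w v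
    using Am[OF that, of v] by (intro integrable_real_indicator) (auto simp: fmeasurable_def)
  have "integral\<^sup>L lebesgue (\<lambda>x. \<Sum>w\<in>Wgroup. \<Sum>v\<in>VR (2*R). indicator (A w v) x)
      = integral\<^sup>L lebesgue (\<lambda>x. indicator S x * real_of_int m)"
  proof (rule integral_cong_AE[OF _ _ eq])
    show "(\<lambda>x. \<Sum>w\<in>Wgroup. \<Sum>v\<in>VR (2*R). indicator (A w v) x :: real) \<in> borel_measurable lebesgue"
      using Am by (intro borel_measurable_sum borel_measurable_indicator) (auto simp: fmeasurable_def)
    show "(\<lambda>x. indicator S x * real_of_int m) \<in> borel_measurable lebesgue"
      using S(1) by (intro borel_measurable_times borel_measurable_indicator borel_measurable_const) (auto simp: fmeasurable_def)
  qed
  moreover have "integral\<^sup>L lebesgue (\<lambda>x. \<Sum>w\<in>Wgroup. \<Sum>v\<in>VR (2*R). indicator (A w v) x :: real)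
      = (\<Sum>w\<in>Wgroup. \<Sum>v\<in>VR (2*R). measure lebesgue (A w v))"
  proof -
    have "integral\<^sup>L lebesgue (\<lambda>x. \<Sum>w\<in>Wgroup. \<Sum>v\<in>VR (2*R). indicator (A w v) x :: real)
        = (\<Sum>w\<in>Wgroup. integral\<^sup>L lebesgue (\<lambda>x. \<Sum>v\<in>VR (2*R). indicator (A w v) x :: real))"
      using int_ind by (intro Bochner_Integration.integral_sum[where f="\<lambda>w x. \<Sum>v\<in>VR (2*R). indicator (A w v) x"] integrable_sum) auto
    also have "\<dots> = (\<Sum>w\<in>Wgroup. \<Sum>v\<in>VR (2*R). integral\<^sup>L lebesgue (indicator (A w v) :: _ \<Rightarrow> real))"
      using int_ind by (intro sum.cong refl Bochner_Integration.integral_sum[where f="\<lambda>v. indicator (A w v)" for w]) auto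
    also have "\<dots> = (\<Sum>w\<in>Wgroup. \<Sum>v\<in>VR (2*R). measure lebesgue (A w v))"
      by simp
    finally show ?thesis .
  qed
  moreover have "integral\<^sup>L lebesgue (\<lambda>x. indicator S x * real_of_int m) = m * measure lebesgue S"
    using S(1) by (simp add: fmeasurable_def integrable_real_indicator)
  ultimately show ?thesis unfolding A_def by simp
qed

definition Qc :: "(real^'n::finite) set" where
  "Qc = {x. \<forall>i. 0 \<le> x $ i \<and> x $ i < 1}"

lemma Qc_eq: "Qc = cbox 0 1 - (\<Union>i. {x. 1 \<le> x $ i})"
  unfolding Qc_def apply (auto simp: mem_box_cart not_le)
  apply (meson less_imp_le)
  by (meson not_le)

lemma Qc_meas: "(Qc :: (real^'n::finite) set) \<in> lmeasurable"
proof -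
  have c: "closed (\<Union>i. {x::real^'n. 1 \<le> x $ i})"
    by (intro closed_UN finite_UNIV ballI closed_Collect_le continuous_intros) auto
  have "(\<Union>i. {x::real^'n. 1 \<le> x $ i}) \<in> sets lebesgue" using closed_lebesgue[OF c] .
  then show ?thesis unfolding Qc_eq by (intro fmeasurable_Diff) auto
qed

lemma Qc_measure: "measure lebesgue (Qc :: (real^'n::finite) set) = 1"
proof -
  have cb: "measure lebesgue (cbox 0 (1::real^'n)) = 1"
  proof -
    have "cbox 0 (1::real^'n) \<noteq> {}" by (simp add: interval_ne_empty_cart)
    then have "measure lborel (cbox 0 (1::real^'n)) = 1" by (simp add: content_cbox_cart)
    then show ?thesis by simp
  qed
  have bb: "measure lebesgue (box 0 (1::real^'n)) = 1"
  proof -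
    have "measure lborel (box 0 (1::real^'n)) = measure lborel (cbox 0 (1::real^'n))"
      by (simp only: measure_lborel_box_eq measure_lborel_cbox_eq)
    then show ?thesis using cb by simp
  qed
  have s1: "box 0 1 \<subseteq> (Qc :: (real^'n) set)" unfolding Qc_def apply (auto simp: mem_box_cart)
    by (meson less_imp_le)
  have s2: "(Qc :: (real^'n) set) \<subseteq> cbox 0 1" unfolding Qc_def apply (auto simp: mem_box_cart)
    by (meson less_imp_le)
  have "measure lebesgue (box 0 (1::real^'n)) \<le> measure lebesgue (Qc :: (real^'n) set)"
    using Qc_meas by (intro measure_mono_fmeasurable[OF s1]) (auto simp: fmeasurable_def)
  moreover have "measure lebesgue (Qc :: (real^'n) set) \<le> measure lebesgue (cbox 0 (1::real^'n))"
    by (rule measure_mono_fmeasurable[OF s2 fmeasurableD[OF Qc_meas] lmeasurable_cbox])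
  ultimately show ?thesis using cb bb by linarith
qed

lemma tiling:
  fixes A :: "(real^'n::finite) set"
  assumes A: "A \<in> sets lebesgue" "\<forall>y\<in>A. norm y \<le> R" and Q: "\<forall>x\<in>Qc. norm (x::real^'n) \<le> R"
  shows "(\<Sum>u\<in>VR (2*R). measure lebesgue (Qc \<inter> {x. x + u \<in> A})) = measure lebesgue A"
proof -
  define T where "T u = ((+) u ` Qc) \<inter> A" for u :: "real^'n"
  have memT: "y \<in> T u \<longleftrightarrow> y - u \<in> Qc \<and> y \<in> A" for y u
    unfolding T_def by (auto simp: image_iff intro!: bexI[of _ "y - u"])
  have Tm: "T u \<in> fmeasurable lebesgue" for u
    unfolding T_def by (intro fmeasurable_Int_fmeasurable measurable_translation Qc_meas A(1))
  have im: "(+) u ` (Qc \<inter> {x. x + u \<in> A}) = T u" for u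
  proof
    show "(+) u ` (Qc \<inter> {x. x + u \<in> A}) \<subseteq> T u" by (auto simp: memT add.commute)
    show "T u \<subseteq> (+) u ` (Qc \<inter> {x. x + u \<in> A})"
    proof
      fix y assume "y \<in> T u"
      then have "y - u \<in> Qc \<inter> {x. x + u \<in> A}" by (simp add: memT)
      then show "y \<in> (+) u ` (Qc \<inter> {x. x + u \<in> A})" by (intro image_eqI[of _ _ "y - u"]) auto
    qed
  qed
  have m: "measure lebesgue (Qc \<inter> {x. x + u \<in> A}) = measure lebesgue (T u)" for u
    using measure_translation[of u "Qc \<inter> {x. x + u \<in> A}"] im by simp
  have fl: "u $ i = of_int \<lfloor>y $ i\<rfloor>" if "u \<in> Zv" "y - u \<in> Qc" for u y i
  proof -
    have "u $ i \<in> \<int>" using that(1) unfolding Zv_def by simp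
    then obtain k where k: "u $ i = of_int k" by (erule Ints_cases)
    have "0 \<le> y $ i - u $ i" "y $ i - u $ i < 1" using that(2) unfolding Qc_def by auto
    then have "\<lfloor>y $ i\<rfloor> = k" using k by (intro floor_unique) auto
    then show ?thesis using k by simp
  qed
  have cover: "A = (\<Union>u\<in>VR (2*R). T u)"
  proof
    show "(\<Union>u\<in>VR (2*R). T u) \<subseteq> A" by (auto simp: memT)
    show "A \<subseteq> (\<Union>u\<in>VR (2*R). T u)"
    proof
      fix y assume y: "y \<in> A"
      define u where "u = (\<chi> i. (of_int \<lfloor>y $ i\<rfloor> :: real))"
      have uZ: "u \<in> Zv" unfolding u_def Zv_def by simp
      have yu: "y - u \<in> Qc" unfolding u_def Qc_def by (auto simp: of_int_floor_le) linarith
      have "norm u \<le> norm y + norm (y - u)" using norm_triangle_ineq4[of y "y - u"] by simp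
      also have "\<dots> \<le> 2 * R" using A(2) y Q yu by (smt (verit))
      finally have "u \<in> VR (2*R)" using uZ by (simp add: VR_def)
      then show "y \<in> (\<Union>u\<in>VR (2*R). T u)" using y yu by (auto simp: memT)
    qed
  qed
  have disj: "pairwise (\<lambda>u u'. disjnt (T u) (T u')) (VR (2*R))"
  proof (rule pairwiseI)
    fix u u' :: "real^'n" assume uu: "u \<in> VR (2*R)" "u' \<in> VR (2*R)" "u \<noteq> u'"
    have "T u \<inter> T u' = {}"
    proof (rule ccontr)
      assume "T u \<inter> T u' \<noteq> {}"
      then obtain y where "y \<in> T u" "y \<in> T u'" by blast
      then have "y - u \<in> Qc" "y - u' \<in> Qc" by (auto simp: memT)
      then have "u $ i = u' $ i" for i
        using fl[of u y i] fl[of u' y i] uu(1,2) by (simp add: VR_def)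
      then show False using uu(3) by (simp add: vec_eq_iff)
    qed
    then show "disjnt (T u) (T u')" by (simp add: disjnt_def)
  qed
  have "measure lebesgue A = (\<Sum>u\<in>VR (2*R). measure lebesgue (T u))"
    unfolding cover by (rule measure_UNION'[OF finite_VR Tm disj])
  then show ?thesis by (simp add: m)
qed

lemma lc_Inter:
  assumes "finite F" "\<forall>h\<in>F. \<exists>e>0. lc h z e"
  shows "\<exists>e>0. lc (\<Inter>F) z e"
  using assms
proof (induction F rule: finite_induct)
  case empty then show ?case using lc_UNIV by (intro exI[of _ 1]) auto
next
  case (insert h F)
  then obtain e1 e2 where "e1 > 0" "lc h z e1" "e2 > 0" "lc (\<Inter>F) z e2" by auto
  then have "lc (h \<inter> \<Inter>F) z (min e1 e2)" by (intro lc_Int) (auto intro: lc_mono)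
  then show ?case using \<open>e1 > 0\<close> \<open>e2 > 0\<close> by (intro exI[of _ "min e1 e2"]) auto
qed

lemma lc_Union:
  assumes "finite F" "\<forall>h\<in>F. \<exists>e>0. lc h z e"
  shows "\<exists>e>0. lc (\<Union>F) z e"
  using assms
proof (induction F rule: finite_induct)
  case empty then show ?case using lc_empty by (intro exI[of _ 1]) auto
next
  case (insert h F)
  then obtain e1 e2 where "e1 > 0" "lc h z e1" "e2 > 0" "lc (\<Union>F) z e2" by auto
  then have "lc (h \<union> \<Union>F) z (min e1 e2)" by (intro lc_Un) (auto intro: lc_mono)
  then show ?case using \<open>e1 > 0\<close> \<open>e2 > 0\<close> by (intro exI[of _ "min e1 e2"]) auto
qed

lemma lc_polyhedron: assumes "polyhedron S" shows "\<exists>e>0. lc S z e"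
proof -
  obtain F where F: "finite F" "S = \<Inter>F" "\<forall>h\<in>F. \<exists>a b. a \<noteq> 0 \<and> h = {x. a \<bullet> x \<le> b}"
    using assms unfolding polyhedron_def by blast
  have "\<forall>h\<in>F. \<exists>e>0. lc h z e"
  proof
    fix h assume "h \<in> F"
    then obtain a b where "h = {x. a \<bullet> x \<le> b}" using F(3) by blast
    then show "\<exists>e>0. lc h z e" using lc_halfspace by simp
  qed
  then show ?thesis using lc_Inter[OF F(1)] F(2) by simp
qed

lemma lc_gen_polytope: assumes "gen_polytope P" shows "\<exists>e>0. lc P z e"
proof -
  obtain F where F: "finite F" "\<forall>S\<in>F. polytope S" "P = \<Union>F"
    using assms unfolding gen_polytope_def by blast
  have "\<forall>h\<in>F. \<exists>e>0. lc h z e" using F(2) lc_polyhedron polytope_imp_polyhedron by blast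
  then show ?thesis using lc_Union[OF F(1)] F(3) by simp
qed

definition ratio :: "(real^'n::finite) set \<Rightarrow> real^'n \<Rightarrow> real \<Rightarrow> real" where
  "ratio A z r = measure lebesgue (ball z r \<inter> A) / measure lebesgue (ball z r)"

lemma lc_scale:
  assumes lc: "lc A z e" and r: "0 < r" "r < e"
  defines "s \<equiv> e / 2"
  shows "ball z r \<inter> A = (\<lambda>y. (r/s) *\<^sub>R y + (z - (r/s) *\<^sub>R z)) ` (ball z s \<inter> A)"
proof -
  have s: "0 < s" "s < e" using r unfolding s_def by auto
  define t where "t = r / s"
  have t: "t > 0" using r s unfolding t_def by simp
  have h: "(\<lambda>y. (r/s) *\<^sub>R y + (z - (r/s) *\<^sub>R z)) = (\<lambda>y. z + t *\<^sub>R (y - z))"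
    unfolding t_def by (auto simp: algebra_simps)
  have dh: "dist (z + c *\<^sub>R (y - z)) z = c * dist y z" if "c > 0" for c y
    using that by (simp add: dist_norm)
  show ?thesis unfolding h
  proof
    show "ball z r \<inter> A \<subseteq> (\<lambda>y. z + t *\<^sub>R (y - z)) ` (ball z s \<inter> A)"
    proof
      fix y' assume y': "y' \<in> ball z r \<inter> A"
      define y where "y = z + (1/t) *\<^sub>R (y' - z)"
      have hy: "z + t *\<^sub>R (y - z) = y'" using t unfolding y_def by simp
      have dy: "dist y z = dist y' z / t" using dh[of "1/t" y'] t unfolding y_def by simp
      have "dist y' z < r" using y' by (simp add: dist_commute)
      then have "dist y z < s" using t r s unfolding dy t_def by (simp add: field_simps)
      moreover have "t * dist y z < e" using dy t \<open>dist y' z < r\<close> r by simp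
      ultimately have "y \<in> A \<longleftrightarrow> z + t *\<^sub>R (y - z) \<in> A"
        by (intro lc[unfolded lc_def, rule_format]) (use t s in linarith)+
      then have "y \<in> A \<longleftrightarrow> y' \<in> A" using hy by simp
      then show "y' \<in> (\<lambda>y. z + t *\<^sub>R (y - z)) ` (ball z s \<inter> A)"
        using y' \<open>dist y z < s\<close> hy by (auto simp: dist_commute intro!: image_eqI[of _ _ y])
    qed
    show "(\<lambda>y. z + t *\<^sub>R (y - z)) ` (ball z s \<inter> A) \<subseteq> ball z r \<inter> A"
    proof clarify
      fix y assume y: "y \<in> ball z s" "y \<in> A"
      have dy: "dist y z < s" using y by (simp add: dist_commute)
      have ts: "t * s = r" unfolding t_def using s by simp
      have "t * dist y z < t * s" using dy t by simp
      then have d: "dist (z + t *\<^sub>R (y - z)) z < r"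
        using dh[OF t, of y] ts by simp
      then have "t * dist y z < e" using dh[OF t, of y] r by simp
      then have "y \<in> A \<longleftrightarrow> z + t *\<^sub>R (y - z) \<in> A"
        by (intro lc[unfolded lc_def, rule_format]) (use dy s t in linarith)+
      then have "z + t *\<^sub>R (y - z) \<in> A" using y(2) by simp
      then show "z + t *\<^sub>R (y - z) \<in> ball z r \<inter> A" using d by (simp add: dist_commute)
    qed
  qed
qed

lemma lc_ratio:
  assumes lc: "lc A z e" and r: "0 < r" "r < e"
  shows "ratio A z r = ratio A z (e/2)"
proof -
  define s where "s = e / 2"
  have s: "s > 0" using r unfolding s_def by simp
  have "lc UNIV z e" by (rule lc_UNIV)
  have e1: "ball z r \<inter> A = (\<lambda>y. (r/s) *\<^sub>R y + (z - (r/s) *\<^sub>R z)) ` (ball z s \<inter> A)"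
    using lc_scale[OF lc r] unfolding s_def by simp
  have e2: "ball z r \<inter> UNIV = (\<lambda>y. (r/s) *\<^sub>R y + (z - (r/s) *\<^sub>R z)) ` (ball z s \<inter> UNIV)"
    using lc_scale[OF lc_UNIV r] unfolding s_def by simp
  have k: "\<bar>r/s\<bar> ^ DIM(real^'a) \<noteq> 0" using r s by simp
  have m1: "measure lebesgue (ball z r \<inter> A) = \<bar>r/s\<bar> ^ DIM(real^'a) * measure lebesgue (ball z s \<inter> A)"
    unfolding e1 by (rule measure_lebesgue_affine)
  have m2: "measure lebesgue (ball z r) = \<bar>r/s\<bar> ^ DIM(real^'a) * measure lebesgue (ball z s)"
    using measure_lebesgue_affine[of "r/s" "z - (r/s) *\<^sub>R z" "ball z s \<inter> UNIV"] e2 by simp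
  show ?thesis
    unfolding ratio_def s_def[symmetric] m1 m2 using k
    by (rule mult_divide_mult_cancel_left)
qed

lemma ld_eq:
  assumes "e > 0" "\<forall>r. 0 < r \<and> r < e \<longrightarrow> ratio P x r = c"
  shows "local_density P x = c"
  unfolding local_density_def
proof (rule the_equality)
  show "\<exists>e>0. \<forall>r. 0 < r \<and> r < e \<longrightarrow> measure lebesgue (ball x r \<inter> P) / measure lebesgue (ball x r) = c"
    using assms unfolding ratio_def by blast
next
  fix c' assume "\<exists>e>0. \<forall>r. 0 < r \<and> r < e \<longrightarrow> measure lebesgue (ball x r \<inter> P) / measure lebesgue (ball x r) = c'"
  then obtain e' where e': "e' > 0" "\<forall>r. 0 < r \<and> r < e' \<longrightarrow> ratio P x r = c'"
    unfolding ratio_def by blast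
  define r where "r = min e e' / 2"
  have "0 < r" "r < e" "r < e'" using e' assms(1) unfolding r_def by auto
  then have "ratio P x r = c'" "ratio P x r = c" using e'(2) assms(2) by blast+
  then show "c' = c" by simp
qed

lemma LD:
  assumes "gen_polytope P"
  shows "\<exists>e>0. \<forall>r. 0 < r \<and> r < e \<longrightarrow> ratio P z r = local_density P z"
proof -
  obtain e where e: "e > 0" "lc P z e" using lc_gen_polytope[OF assms] by blast
  have "\<forall>r. 0 < r \<and> r < e \<longrightarrow> ratio P z r = ratio P z (e/2)" using lc_ratio e by blast
  then have "local_density P z = ratio P z (e/2)" using ld_eq e(1) by blast
  then show ?thesis using \<open>\<forall>r. 0 < r \<and> r < e \<longrightarrow> ratio P z r = ratio P z (e/2)\<close> e(1) by metis
qed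

lemma aff_ball:
  assumes w: "w \<in> SP"
  shows "aff w v ` ball x r = ball (aff w v x) r"
proof -
  have d: "dist (aff w v y) (aff w v x) = dist y x" for y
  proof -
    have "aff w v y - aff w v x = w (y - x)"
      using SP_add[OF w, of "y - x" x] by (simp add: aff_def)
    then show ?thesis using SP_norm[OF w] by (simp add: dist_norm)
  qed
  show ?thesis
  proof
    show "aff w v ` ball x r \<subseteq> ball (aff w v x) r" using d by (auto simp: dist_commute)
    show "ball (aff w v x) r \<subseteq> aff w v ` ball x r"
    proof
      fix z assume z: "z \<in> ball (aff w v x) r"
      obtain y where y: "w y = z - v" using SP_surj[OF w] by (metis surjD)
      have "aff w v y = z" using y by (simp add: aff_def)
      then have "y \<in> ball x r" using z d[of y] by (simp add: dist_commute)
      then show "z \<in> aff w v ` ball x r" using \<open>aff w v y = z\<close> by blast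
    qed
  qed
qed

lemma aff_image_Int: "aff w v ` (B \<inter> {y. aff w v y \<in> P}) = aff w v ` B \<inter> P"
  by auto

lemma ratio_aff:
  assumes w: "w \<in> SP" and P: "closed P"
  shows "ratio P (aff w v x) r = measure lebesgue (ball x r \<inter> {y. aff w v y \<in> P}) / measure lebesgue (ball x r)"
proof -
  have m1: "ball x r \<inter> {y. aff w v y \<in> P} \<in> lmeasurable"
    by (intro fmeasurable_Int_fmeasurable lmeasurable_ball closed_lebesgue closed_pre[OF w P])
  have "ball (aff w v x) r \<inter> P = aff w v ` (ball x r \<inter> {y. aff w v y \<in> P})"
    unfolding aff_image_Int aff_ball[OF w] ..
  then have e1: "measure lebesgue (ball (aff w v x) r \<inter> P) = measure lebesgue (ball x r \<inter> {y. aff w v y \<in> P})"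
    using aff_measure[OF w m1] by simp
  have e2: "measure lebesgue (ball (aff w v x) r) = measure lebesgue (ball x r)"
    using aff_measure[OF w lmeasurable_ball, of v x r] aff_ball[OF w] by simp
  show ?thesis unfolding ratio_def e1 e2 ..
qed

lemma per_w:
  fixes P :: "(real^'n::finite) set"
  assumes w: "w \<in> SP" and P: "closed P" "\<forall>y\<in>P. norm y \<le> R" and Q: "\<forall>x\<in>(Qc::(real^'n) set). norm x \<le> R"
  shows "(\<Sum>v\<in>VR (2*R). measure lebesgue (Qc \<inter> {y. aff w v y \<in> P})) = measure lebesgue P"
proof -
  define A where "A = {y. w y \<in> P}"
  have A_eq: "A = {y. aff w 0 y \<in> P}" unfolding A_def aff_def by simp
  have Acl: "closed A" unfolding A_eq by (rule closed_pre[OF w P(1)])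
  have Ab: "\<forall>y\<in>A. norm y \<le> R" using P(2) SP_norm[OF w] unfolding A_def by auto
  have Acomp: "compact A" using Acl Ab by (auto simp: compact_eq_bounded_closed bounded_iff)
  have sub: "w ` VR (2*R) \<subseteq> VR (2*R)" using SP_Zv[OF w] SP_norm[OF w] by (auto simp: VR_def)
  have inj: "inj_on w (VR (2*R))" using SP_inj[OF w] by (auto intro: inj_on_subset)
  have img: "w ` VR (2*R) = VR (2*R)" by (rule endo_inj_surj[OF finite_VR sub inj])
  have "(\<Sum>v\<in>VR (2*R). measure lebesgue (Qc \<inter> {y. aff w v y \<in> P}))
      = (\<Sum>v\<in>w ` VR (2*R). measure lebesgue (Qc \<inter> {y. aff w v y \<in> P}))" unfolding img ..
  also have "\<dots> = (\<Sum>u\<in>VR (2*R). measure lebesgue (Qc \<inter> {y. aff w (w u) y \<in> P}))"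
    by (rule sum.reindex[OF inj, unfolded comp_def])
  also have "\<dots> = (\<Sum>u\<in>VR (2*R). measure lebesgue (Qc \<inter> {y. y + u \<in> A}))"
    by (intro sum.cong refl) (simp add: A_def aff_def SP_add[OF w])
  also have "\<dots> = measure lebesgue A"
    by (rule tiling[OF closed_lebesgue[OF Acl] Ab Q])
  also have "\<dots> = measure lebesgue (w ` A)"
    using SP_measure[OF w lmeasurable_compact[OF Acomp]] by simp
  also have "w ` A = P"
  proof
    show "w ` A \<subseteq> P" unfolding A_def by auto
    show "P \<subseteq> w ` A"
    proof
      fix z assume "z \<in> P"
      obtain y where "w y = z" using SP_surj[OF w] by (metis surjD)
      then show "z \<in> w ` A" using \<open>z \<in> P\<close> unfolding A_def by blast
    qed
  qed
  finally show ?thesis .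
qed

theorem main_all:
  fixes P :: "(real^'n::finite) set" and m :: int
  assumes "gen_polytope P"
    and AE: "AE x in lebesgue. (\<Sum>\<^sub>\<infinity>g\<in>Ggroup. indicator P (g x)) = real_of_int m"
  shows "(\<Sum>\<^sub>\<infinity>g\<in>Ggroup. local_density P (g x))
           = real (card (Wgroup :: (real^'n \<Rightarrow> real^'n) set)) * measure lebesgue P"
proof -
  obtain F where F: "finite F" "\<forall>S\<in>F. polytope S" "P = \<Union>F"
    using assms(1) unfolding gen_polytope_def by blast
  have Pc: "compact P" unfolding F(3) using F(1,2) polytope_imp_compact by blast
  then have Pcl: "closed P" by (rule compact_imp_closed)
  obtain RP where RP: "\<forall>y\<in>P. norm y \<le> RP" using compact_imp_bounded[OF Pc] by (auto simp: bounded_iff)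
  obtain RQ where RQ: "\<forall>y\<in>(Qc::(real^'n) set). norm y \<le> RQ"
  proof -
    have "bounded (Qc :: (real^'n) set)"
      by (rule bounded_subset[OF bounded_cbox[of 0 1]]) (auto simp: Qc_def mem_box_cart less_imp_le)
    then show ?thesis using that by (auto simp: bounded_iff)
  qed
  define R1 where "R1 = max RP RQ"
  have P1: "\<forall>y\<in>P. norm y \<le> R1" using RP unfolding R1_def by force
  have Q1: "\<forall>y\<in>(Qc::(real^'n) set). norm y \<le> R1" using RQ unfolding R1_def by force
  have q1: "(\<Sum>w\<in>Wgroup. \<Sum>v\<in>VR (2*R1). measure lebesgue ((Qc::(real^'n) set) \<inter> {y. aff w v y \<in> P}))
        = m * measure lebesgue (Qc::(real^'n) set)"
    by (rule sum_measure[OF Pcl P1 Qc_meas Q1 AE])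
  have q2: "(\<Sum>w\<in>Wgroup. \<Sum>v\<in>VR (2*R1). measure lebesgue ((Qc::(real^'n) set) \<inter> {y. aff w v y \<in> P}))
        = (\<Sum>w\<in>(Wgroup :: (real^'n \<Rightarrow> real^'n) set). measure lebesgue P)"
    using per_w[OF _ Pcl P1 Q1] W_sub_SP by (intro sum.cong refl) blast
  have mval: "real_of_int m = real (card (Wgroup :: (real^'n \<Rightarrow> real^'n) set)) * measure lebesgue P"
  proof -
    have qm: "measure lebesgue (Qc::(real^'n) set) = 1" by (rule Qc_measure)
    show ?thesis using q1 q2 qm by simp
  qed
  define R2 where "R2 = max RP (norm x + 1)"
  have P2: "\<forall>y\<in>P. norm y \<le> R2" using RP unfolding R2_def by force
  have zero: "local_density P (aff w v x) = 0" if w: "w \<in> Wgroup" and v: "\<not> norm v \<le> 2 * R2" for w v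
  proof -
    obtain e where e: "e > 0" "\<forall>r. 0 < r \<and> r < e \<longrightarrow> ratio P (aff w v x) r = local_density P (aff w v x)"
      using LD[OF assms(1)] by blast
    define r where "r = min e 1 / 2"
    have r: "0 < r" "r < e" "r < 1" using e(1) unfolding r_def by auto
    have "ball (aff w v x) r \<inter> P = {}"
    proof (rule ccontr)
      assume "ball (aff w v x) r \<inter> P \<noteq> {}"
      then obtain y where y: "y \<in> ball (aff w v x) r" "y \<in> P" by blast
      have nw: "norm (w x) = norm x" using SP_norm W_sub_SP w by blast
      have "norm v \<le> norm (w x + v) + norm (w x)" using norm_triangle_ineq4[of "w x + v" "w x"] by simp
      moreover have "norm (w x + v) \<le> norm y + r"
      proof -
        have "norm (w x + v - y) < r" using y(1) by (simp add: aff_def dist_norm)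
        then show ?thesis using norm_triangle_sub[of "w x + v" y] by linarith
      qed
      moreover have "norm y \<le> R2" using P2 y(2) by blast
      moreover have "norm x + 1 \<le> R2" unfolding R2_def by simp
      ultimately show False using v nw r by linarith
    qed
    then have "ratio P (aff w v x) r = 0" unfolding ratio_def by simp
    then show ?thesis using e(2) r by metis
  qed
  have s1: "(\<Sum>\<^sub>\<infinity>g\<in>Ggroup. local_density P (g x)) = (\<Sum>w\<in>Wgroup. \<Sum>v\<in>VR (2*R2). local_density P (aff w v x))"
  proof -
    have "\<forall>w\<in>Wgroup. \<forall>v\<in>Zv. local_density P (aff w v x) \<noteq> 0 \<longrightarrow> norm v \<le> 2 * R2"
      using zero by blast
    then show ?thesis using infsum_G[where h="\<lambda>g. local_density P (g x)" and R="2*R2"] by simp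
  qed
  define WV where "WV = (Wgroup :: (real^'n \<Rightarrow> real^'n) set) \<times> (VR (2*R2) :: (real^'n) set)"
  have finWV: "finite WV" unfolding WV_def by (intro finite_cartesian_product finite_W finite_VR)
  have "\<forall>p\<in>WV. \<exists>e. e > 0 \<and> (\<forall>r. 0 < r \<and> r < e \<longrightarrow> ratio P (aff (fst p) (snd p) x) r = local_density P (aff (fst p) (snd p) x))"
    using LD[OF assms(1)] by blast
  then obtain E where E: "\<forall>p\<in>WV. E p > 0 \<and> (\<forall>r. 0 < r \<and> r < E p \<longrightarrow> ratio P (aff (fst p) (snd p) x) r = local_density P (aff (fst p) (snd p) x))"
    by (metis (no_types, lifting) bchoice)
  define e0 where "e0 = Min (insert 1 (E ` WV))"
  have e0pos: "e0 > 0" unfolding e0_def using finWV E by (subst Min_gr_iff) auto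
  have e0le: "e0 \<le> E p" if "p \<in> WV" for p unfolding e0_def using finWV that by (intro Min_le) auto
  have e0le1: "e0 \<le> 1" unfolding e0_def using finWV by (intro Min_le) auto
  define r where "r = e0 / 2"
  have r: "0 < r" "r < e0" "r \<le> 1/2" using e0pos e0le1 unfolding r_def by auto
  have ld_r: "local_density P (aff w v x) = measure lebesgue (ball x r \<inter> {y. aff w v y \<in> P}) / measure lebesgue (ball x r)"
    if "w \<in> Wgroup" "v \<in> VR (2*R2)" for w v
  proof -
    have p: "(w, v) \<in> WV" using that unfolding WV_def by simp
    have "r < E (w, v)" using e0le[OF p] r by linarith
    then have "ratio P (aff w v x) r = local_density P (aff w v x)" using E p r(1) by auto
    moreover have "w \<in> SP" using that W_sub_SP by blast
    ultimately show ?thesis using ratio_aff[OF _ Pcl] by metis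
  qed
  have S2: "\<forall>y\<in>ball x r. norm y \<le> R2"
  proof
    fix y assume "y \<in> ball x r"
    then have "norm (x - y) < r" by (simp add: dist_norm)
    then have "norm y \<le> norm x + r" using norm_triangle_ineq2[of y x] norm_minus_commute[of x y] by linarith
    then show "norm y \<le> R2" using r unfolding R2_def by simp
  qed
  have MB: "measure lebesgue (ball x r) > 0"
    using content_ball_pos[OF r(1), of x] by simp
  have "(\<Sum>w\<in>Wgroup. \<Sum>v\<in>VR (2*R2). local_density P (aff w v x))
      = (\<Sum>w\<in>Wgroup. \<Sum>v\<in>VR (2*R2). measure lebesgue (ball x r \<inter> {y. aff w v y \<in> P}) / measure lebesgue (ball x r))"
    using ld_r by (intro sum.cong refl) auto
  also have "\<dots> = (\<Sum>w\<in>Wgroup. \<Sum>v\<in>VR (2*R2). measure lebesgue (ball x r \<inter> {y. aff w v y \<in> P})) / measure lebesgue (ball x r)"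
    by (simp add: sum_divide_distrib)
  also have "(\<Sum>w\<in>Wgroup. \<Sum>v\<in>VR (2*R2). measure lebesgue (ball x r \<inter> {y. aff w v y \<in> P})) = m * measure lebesgue (ball x r)"
    by (rule sum_measure[OF Pcl P2 lmeasurable_ball S2 AE])
  finally show ?thesis using s1 MB mval by simp
qed

theorem proposition1:
  fixes P :: "(real^'n::{finite,linorder}) set" and m :: int
  assumes "gen_polytope P"
    and "AE x in lebesgue. (\<Sum>\<^sub>\<infinity>g\<in>Ggroup. indicator P (g x)) = real_of_int m"
  shows "\<forall>x\<in>simplex_T. (\<Sum>\<^sub>\<infinity>g\<in>Ggroup. local_density P (g x))
           = real (card (Wgroup :: (real^'n::{finite,linorder} \<Rightarrow> real^'n::{finite,linorder}) set)) * measure lebesgue P"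
  using main_all[OF assms] by blast

end
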